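(* Let $H$ be a finite, connected, $d$-regular graph on $[n]$, let $i_0$ be a vertex of $H$, and let $j_1,\dots,j_\ell$ ($1\le\ell\le d$) be distinct neighbours of $i_0$. Then: (i) $\Phi_{\ell-1}(x_{i_0};x_{j_1},\dots,x_{j_\ell})\in\mathbb{I}(U(H))$; (ii) $\Phi_{\ell-1}(x_0;x_1,\dots,x_\ell)$ is symmetric in $x_1,\dots,x_\ell$, and its total degree in the variables $x_0,\dots,x_\ell$ is $2d-\ell+1$; (iii) if $\overline{c}\in\mathbb{C}^m$ and $u_0\in\mathbb{C}$ are such that $\Phi_{\overline{c}}(u_0,y)$ has $d$ distinct roots $u_1,\dots,u_d$, then the set of solutions $(x_1,\dots,x_d)\in\mathbb{C}^d$ of the system $\Phi_0(u_0;x_1)=\Phi_1(u_0;x_1,x_2)=\dots=\Phi_{d-1}(u_0;x_1,\dots,x_d)=0$ (coefficients specialized at $\overline{c}$) is exactly the set of all permutations of $(u_1,\dots,u_d)$.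
   Context: Let $\overline{a}=(a_{ij})_{0\le j\le i\le d}$ be $m=(d+1)(d+2)/2$ indeterminates, with $a_{ji}=a_{ij}$, and $\Phi(x,y)=\Phi_{\overline{a}}(x,y)=\sum_{i,j=0}^d a_{ij}x^iy^j$; $\Phi_{\overline{c}}$ denotes its specialization at $\overline{c}\in\mathbb{C}^m$. Define $\Phi_0(x_0;x_1)=\Phi(x_0,x_1)$ and recursively, for $\ell\ge 2$, $\Phi_{\ell-1}(x_0;x_1,\dots,x_\ell)=\dfrac{\Phi_{\ell-2}(x_0;x_1,\dots,x_{\ell-1})-\Phi_{\ell-2}(x_0;x_1,\dots,x_{\ell-2},x_\ell)}{x_\ell-x_{\ell-1}}$ (a polynomial). With $E$ the edge set of $H$: $S(H)=\{\Phi_{\overline{a}}(x_i,x_j):ij\in E\}\subseteq\mathbb{C}[\overline{a},x_1,\dots,x_n]$, $W(H)=\mathbb{V}(S(H))\subseteq\mathbb{C}^{m+n}$, $Z(H)=W(H)\cap\bigcup_{i>j}\mathbb{V}(x_i-x_j)$, $U(H)=\overline{W(H)\setminus Z(H)}$ (Zariski closure), and $\mathbb{I}(U(H))$ is the ideal of polynomials vanishing on $U(H)$. *)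

theory Defs
  imports "HOL-Library.Poly_Mapping" "HOL-Computational_Algebra.Polynomial"
    "HOL-Combinatorics.Permutations"
begin

text \<open>Variables: A i j (j \<le> i \<le> d) are the indeterminates a_ij; X k are the x-variables.\<close>
datatype var = A nat nat | X nat

type_synonym mpoly = "(var \<Rightarrow>\<^sub>0 nat) \<Rightarrow>\<^sub>0 complex"

definition Var :: "var \<Rightarrow> mpoly" where
  "Var v = Poly_Mapping.single (Poly_Mapping.single v 1) 1"

definition Const :: "complex \<Rightarrow> mpoly" where
  "Const c = Poly_Mapping.single 0 c"

text \<open>a_ij with the convention a_ji = a_ij: indeterminate A (max i j) (min i j).\<close>
definition acoef :: "nat \<Rightarrow> nat \<Rightarrow> var" where
  "acoef i j = A (max i j) (min i j)"

definition PhiPoly :: "nat \<Rightarrow> mpoly \<Rightarrow> mpoly \<Rightarrow> mpoly" where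
  "PhiPoly d p q = (\<Sum>i\<le>d. \<Sum>j\<le>d. Var (acoef i j) * p ^ i * q ^ j)"

definition psubst :: "(var \<Rightarrow> mpoly) \<Rightarrow> mpoly \<Rightarrow> mpoly" where
  "psubst \<sigma> f = (\<Sum>m\<in>Poly_Mapping.keys f.
      Const (Poly_Mapping.lookup f m) * (\<Prod>v\<in>Poly_Mapping.keys m. \<sigma> v ^ Poly_Mapping.lookup m v))"

definition peval :: "(var \<Rightarrow> complex) \<Rightarrow> mpoly \<Rightarrow> complex" where
  "peval pt f = (\<Sum>m\<in>Poly_Mapping.keys f.
      Poly_Mapping.lookup f m * (\<Prod>v\<in>Poly_Mapping.keys m. pt v ^ Poly_Mapping.lookup m v))"

text \<open>PhiF d k = Phi_k(x_0; x_1, ..., x_{k+1}) in the formal variables X 0, ..., X (k+1);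
  the division is the exact polynomial quotient.\<close>
fun PhiF :: "nat \<Rightarrow> nat \<Rightarrow> mpoly" where
  "PhiF d 0 = PhiPoly d (Var (X 0)) (Var (X 1))"
| "PhiF d (Suc k) = (THE q. q * (Var (X (k + 2)) - Var (X (k + 1)))
      = PhiF d k - psubst (Var(X (k + 1) := Var (X (k + 2)))) (PhiF d k))"

definition pvars :: "mpoly \<Rightarrow> var set" where
  "pvars f = (\<Union>m\<in>Poly_Mapping.keys f. Poly_Mapping.keys m)"

definition xdegm :: "(var \<Rightarrow>\<^sub>0 nat) \<Rightarrow> nat" where
  "xdegm m = (\<Sum>v\<in>Poly_Mapping.keys m. (case v of X _ \<Rightarrow> Poly_Mapping.lookup m v | A _ _ \<Rightarrow> 0))"

definition xdeg :: "mpoly \<Rightarrow> nat" where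
  "xdeg f = Max (xdegm ` Poly_Mapping.keys f)"

definition relvars :: "nat \<Rightarrow> nat \<Rightarrow> var set" where
  "relvars d n = {A i j | i j. j \<le> i \<and> i \<le> d} \<union> {X k | k. k \<in> {1..n}}"

text \<open>The ambient space C^(m+n), coordinates outside relvars fixed to 0.\<close>
definition Amb :: "nat \<Rightarrow> nat \<Rightarrow> (var \<Rightarrow> complex) set" where
  "Amb d n = {pt. \<forall>v. v \<notin> relvars d n \<longrightarrow> pt v = 0}"

definition polys :: "nat \<Rightarrow> nat \<Rightarrow> mpoly set" where
  "polys d n = {f. pvars f \<subseteq> relvars d n}"

definition zclos :: "nat \<Rightarrow> nat \<Rightarrow> (var \<Rightarrow> complex) set \<Rightarrow> (var \<Rightarrow> complex) set" where
  "zclos d n S = {pt \<in> Amb d n. \<forall>f\<in>polys d n.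
      (\<forall>q\<in>S. peval q f = 0) \<longrightarrow> peval pt f = 0}"

definition vanI :: "nat \<Rightarrow> nat \<Rightarrow> (var \<Rightarrow> complex) set \<Rightarrow> mpoly set" where
  "vanI d n S = {f \<in> polys d n. \<forall>pt\<in>S. peval pt f = 0}"

definition WH :: "nat \<Rightarrow> nat \<Rightarrow> (nat \<Rightarrow> nat \<Rightarrow> bool) \<Rightarrow> (var \<Rightarrow> complex) set" where
  "WH d n E = {pt \<in> Amb d n. \<forall>i j. E i j \<longrightarrow> peval pt (PhiPoly d (Var (X i)) (Var (X j))) = 0}"

definition ZH :: "nat \<Rightarrow> nat \<Rightarrow> (nat \<Rightarrow> nat \<Rightarrow> bool) \<Rightarrow> (var \<Rightarrow> complex) set" where
  "ZH d n E = {pt \<in> WH d n E. \<exists>i\<in>{1..n}. \<exists>j\<in>{1..n}. i > j \<and> pt (X i) = pt (X j)}"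

definition UH :: "nat \<Rightarrow> nat \<Rightarrow> (nat \<Rightarrow> nat \<Rightarrow> bool) \<Rightarrow> (var \<Rightarrow> complex) set" where
  "UH d n E = zclos d n (WH d n E - ZH d n E)"

definition specpt :: "(var \<Rightarrow> complex) \<Rightarrow> complex \<Rightarrow> (nat \<Rightarrow> complex) \<Rightarrow> var \<Rightarrow> complex" where
  "specpt c u0 x v = (case v of A a b \<Rightarrow> c v | X k \<Rightarrow> (if k = 0 then u0 else x k))"

definition PhiUni :: "nat \<Rightarrow> (var \<Rightarrow> complex) \<Rightarrow> complex \<Rightarrow> complex poly" where
  "PhiUni d c u0 = (\<Sum>j\<le>d. monom (\<Sum>i\<le>d. c (acoef i j) * u0 ^ i) j)"

end

theory Submission
  imports Defs "HOL-Library.Nat_Bijection" "HOL-Computational_Algebra.Polynomial" "HOL-Combinatorics.Permutations"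
begin


fun hh :: "'a::comm_ring_1 list \<Rightarrow> nat \<Rightarrow> 'a" where
  "hh [] m = (if m = 0 then 1 else 0)"
| "hh (x # xs) m = (\<Sum>i\<le>m. x ^ i * hh xs (m - i))"

declare hh.simps(2)[simp del]

lemma hh_0[simp]: "hh xs 0 = 1"
  by (induction xs) (auto simp: hh.simps)

lemma hh_single[simp]: "hh [x] m = x ^ m"
proof -
  have "(\<Sum>i\<le>m. x ^ i * hh [] (m - i)) = (\<Sum>i\<le>m. if i = m then x ^ i else 0)"
    by (rule sum.cong) auto
  then show ?thesis by (simp add: hh.simps)
qed

lemma hh_rec: "hh (x # xs) (Suc m) = hh xs (Suc m) + x * hh (x # xs) m"
proof -
  have "hh (x # xs) (Suc m) = x ^ 0 * hh xs (Suc m - 0) + (\<Sum>i\<le>m. x ^ Suc i * hh xs (Suc m - Suc i))"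
    by (simp only: hh.simps sum.atMost_Suc_shift)
  also have "\<dots> = hh xs (Suc m) + x * hh (x # xs) m"
    by (simp add: sum_distrib_left mult.assoc hh.simps)
  finally show ?thesis .
qed

lemma hh_diff: "hh (a # S) (Suc m) - hh (c # S) (Suc m) = (a - c) * hh (a # c # S) m"
proof (induction m)
  case 0
  then show ?case by (simp add: hh_rec[of _ _ 0] algebra_simps)
next
  case (Suc m)
  have "hh (a # S) (Suc (Suc m)) - hh (c # S) (Suc (Suc m))
     = a * (hh (a # S) (Suc m) - hh (c # S) (Suc m)) + (a - c) * hh (c # S) (Suc m)"
    by (simp only: hh_rec) (simp add: algebra_simps)
  also have "\<dots> = a * ((a - c) * hh (a # c # S) m) + (a - c) * hh (c # S) (Suc m)"
    using Suc by simp
  also have "\<dots> = (a - c) * (hh (c # S) (Suc m) + a * hh (a # c # S) m)"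
    by (simp add: algebra_simps)
  also have "\<dots> = (a - c) * hh (a # c # S) (Suc m)"
    by (simp only: hh_rec[of a "c # S"])
  finally show ?case .
qed

lemma hh_swap: "hh (a # c # S) m = hh (c # a # S) m"
proof (induction m rule: less_induct)
  case (less m)
  show ?case
  proof (cases m)
    case 0 then show ?thesis by simp
  next
    case (Suc m')
    show ?thesis
    proof (cases m')
      case 0
      then show ?thesis using Suc by (simp add: hh_rec[of _ _ 0] algebra_simps)
    next
      case (Suc m'')
      have ih1: "hh (a # c # S) m' = hh (c # a # S) m'" using less \<open>m = Suc m'\<close> by simp
      have ih2: "hh (a # c # S) m'' = hh (c # a # S) m''" using less \<open>m = Suc m'\<close> Suc by simp
      have e1: "hh (a # c # S) (Suc m') = hh S (Suc m') + c * hh (c # S) m' + a * hh (a # c # S) m'"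
        by (simp only: hh_rec)
      have e2: "hh (c # a # S) (Suc m') = hh S (Suc m') + a * hh (a # S) m' + c * hh (c # a # S) m'"
        by (simp only: hh_rec)
      have f1: "hh (c # a # S) m' = hh (a # S) m' + c * hh (c # a # S) m''"
        using Suc hh_rec[of c "a # S" m''] by simp
      have f2: "hh (a # c # S) m' = hh (c # S) m' + a * hh (a # c # S) m''"
        using Suc hh_rec[of a "c # S" m''] by simp
      have g1: "hh (a # c # S) (Suc m') = hh S (Suc m') + c * hh (c # S) m' + a * (hh (a # S) m' + c * hh (c # a # S) m'')"
        using e1 ih1 f1 by simp
      have g2: "hh (c # a # S) (Suc m') = hh S (Suc m') + a * hh (a # S) m' + c * (hh (c # S) m' + a * hh (c # a # S) m'')"
        using e2 f2 ih1 ih2 by simp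
      have "hh (a # c # S) (Suc m') = hh (c # a # S) (Suc m')"
        unfolding g1 g2 by (simp add: algebra_simps)
      then show ?thesis using \<open>m = Suc m'\<close> by simp
    qed
  qed
qed

lemma hh_cons_cong: "(\<And>m. hh xs m = hh ys m) \<Longrightarrow> hh (x # xs) m = hh (x # ys) m"
  by (simp add: hh.simps)

lemma hh_move: "hh (xs @ a # ys) m = hh (a # xs @ ys) m"
proof (induction xs arbitrary: m)
  case Nil then show ?case by simp
next
  case (Cons x xs)
  have "hh ((x # xs) @ a # ys) m = hh (x # a # xs @ ys) m"
    using Cons by (simp del: hh.simps) (rule hh_cons_cong, simp)
  also have "\<dots> = hh (a # x # xs @ ys) m" by (rule hh_swap)
  finally show ?case by simp
qed

lemma hh_mset: "mset xs = mset ys \<Longrightarrow> hh xs m = hh ys m"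
proof (induction xs arbitrary: ys m)
  case Nil then show ?case by simp
next
  case (Cons x xs)
  then have "x \<in># mset ys" by (metis mset.simps(2) union_single_eq_member)
  then have "x \<in> set ys" by simp
  then obtain ys1 ys2 where ys: "ys = ys1 @ x # ys2" by (meson split_list)
  have "mset xs = mset (ys1 @ ys2)" using Cons.prems ys by simp
  then have "\<And>m. hh xs m = hh (ys1 @ ys2) m" using Cons.IH by blast
  then have "hh (x # xs) m = hh (x # ys1 @ ys2) m" by (rule hh_cons_cong)
  also have "\<dots> = hh ys m" unfolding ys by (rule hh_move[symmetric])
  finally show ?case .
qed

definition DD :: "(nat \<Rightarrow> 'a::comm_ring_1) \<Rightarrow> nat \<Rightarrow> nat \<Rightarrow> 'a list \<Rightarrow> 'a" where
  "DD b d k L = (\<Sum>j\<le>d. if k \<le> j then b j * hh L (j - k) else 0)"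

lemma DD_mset: assumes "mset xs = mset ys" shows "DD b d k xs = DD b d k ys"
  unfolding DD_def by (intro sum.cong refl) (simp add: hh_mset[OF assms])

lemma DD_diff: "DD b d k (a # S) - DD b d k (c # S) = (a - c) * DD b d (Suc k) (a # c # S)"
proof -
  have "DD b d k (a # S) - DD b d k (c # S) = (\<Sum>j\<le>d. (if k \<le> j then b j * hh (a # S) (j - k) else 0) - (if k \<le> j then b j * hh (c # S) (j - k) else 0))"
    unfolding DD_def by (simp add: sum_subtractf)
  also have "\<dots> = (\<Sum>j\<le>d. (a - c) * (if Suc k \<le> j then b j * hh (a # c # S) (j - Suc k) else 0))"
  proof (rule sum.cong)
    fix j assume "j \<in> {..d}"
    show "(if k \<le> j then b j * hh (a # S) (j - k) else 0) - (if k \<le> j then b j * hh (c # S) (j - k) else 0) = (a - c) * (if Suc k \<le> j then b j * hh (a # c # S) (j - Suc k) else 0)"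
    proof (cases "Suc k \<le> j")
      case True
      then have "j - k = Suc (j - Suc k)" by simp
      then have hd: "hh (a # S) (j - k) - hh (c # S) (j - k) = (a - c) * hh (a # c # S) (j - Suc k)"
        using hh_diff[of a S "j - Suc k" c] by simp
      have "b j * hh (a # S) (j - k) - b j * hh (c # S) (j - k) = b j * (hh (a # S) (j - k) - hh (c # S) (j - k))"
        by (simp add: right_diff_distrib)
      also have "\<dots> = (a - c) * (b j * hh (a # c # S) (j - Suc k))"
        unfolding hd by (simp add: mult.left_commute)
      finally show ?thesis using True by simp
    next
      case False
      then show ?thesis by (cases "j = k") auto
    qed
  qed simp
  also have "\<dots> = (a - c) * DD b d (Suc k) (a # c # S)"
    unfolding DD_def by (simp add: sum_distrib_left)
  finally show ?thesis .
qed

lemma DD_single: "DD b d 0 [y] = (\<Sum>j\<le>d. b j * y ^ j)"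
  unfolding DD_def by simp

lemma DD_zero_roots:
  fixes b :: "nat \<Rightarrow> 'a::idom"
  assumes "length L = Suc n" "distinct L" "\<And>y. y \<in> set L \<Longrightarrow> DD b d 0 [y] = 0"
  shows "DD b d n L = 0"
  using assms
proof (induction n arbitrary: L)
  case 0
  from 0(1) obtain y where Ly: "L = [y]" by (auto simp: length_Suc_conv)
  then have "y \<in> set L" by simp
  then have "DD b d 0 [y] = 0" by (rule 0(3))
  then show ?case using Ly by simp
next
  case (Suc n)
  from Suc.prems(1) obtain a L' where L1: "L = a # L'" "length L' = Suc n" by (auto simp: length_Suc_conv)
  from L1(2) obtain c S where "L' = c # S" by (auto simp: length_Suc_conv)
  with L1 have L: "L = a # c # S" by simp
  have "DD b d n (a # S) = 0"
  proof (rule Suc.IH)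
    show "length (a # S) = Suc n" using Suc.prems(1) L by simp
    show "distinct (a # S)" using Suc.prems(2) L by simp
    show "\<And>y. y \<in> set (a # S) \<Longrightarrow> DD b d 0 [y] = 0" by (rule Suc.prems(3)) (auto simp: L)
  qed
  moreover have "DD b d n (c # S) = 0"
  proof (rule Suc.IH)
    show "length (c # S) = Suc n" using Suc.prems(1) L by simp
    show "distinct (c # S)" using Suc.prems(2) L by simp
    show "\<And>y. y \<in> set (c # S) \<Longrightarrow> DD b d 0 [y] = 0" by (rule Suc.prems(3)) (auto simp: L)
  qed
  ultimately have "(a - c) * DD b d (Suc n) (a # c # S) = 0" by (simp add: DD_diff[symmetric])
  moreover have "a \<noteq> c" using Suc.prems(2) L by simp
  ultimately have "DD b d (Suc n) (a # c # S) = 0" by simp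
  then show ?case unfolding L .
qed




definition mono :: "(var \<Rightarrow> 'b::comm_ring_1) \<Rightarrow> (var \<Rightarrow>\<^sub>0 nat) \<Rightarrow> 'b" where
  "mono \<sigma> m = (\<Prod>v\<in>Poly_Mapping.keys m. \<sigma> v ^ Poly_Mapping.lookup m v)"

definition gsubst :: "(complex \<Rightarrow> 'b::comm_ring_1) \<Rightarrow> (var \<Rightarrow> 'b) \<Rightarrow> mpoly \<Rightarrow> 'b" where
  "gsubst h \<sigma> f = (\<Sum>m\<in>Poly_Mapping.keys f. h (Poly_Mapping.lookup f m) * mono \<sigma> m)"

definition ishom :: "(complex \<Rightarrow> 'b::comm_ring_1) \<Rightarrow> bool" where
  "ishom h \<longleftrightarrow> h 0 = 0 \<and> h 1 = 1 \<and> (\<forall>a b. h (a + b) = h a + h b) \<and> (\<forall>a b. h (a * b) = h a * h b)"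

lemma psubst_gsubst: "psubst \<sigma> f = gsubst Const \<sigma> f"
  by (simp add: psubst_def gsubst_def mono_def)

lemma peval_gsubst: "peval pt f = gsubst (\<lambda>x. x) pt f"
  by (simp add: peval_def gsubst_def mono_def)

lemma ishom_Const: "ishom Const"
  unfolding ishom_def Const_def by (simp add: single_add mult_single)

lemma ishom_id: "ishom (\<lambda>x. x)"
  unfolding ishom_def by simp

lemma mono_superset:
  assumes "finite S" "Poly_Mapping.keys m \<subseteq> S"
  shows "mono \<sigma> m = (\<Prod>v\<in>S. \<sigma> v ^ Poly_Mapping.lookup m v)"
  unfolding mono_def
  by (rule prod.mono_neutral_left[OF assms(1) assms(2)]) (simp add: in_keys_iff)

lemma mono_add: "mono \<sigma> (m + n) = mono \<sigma> m * mono \<sigma> n"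
proof -
  let ?S = "Poly_Mapping.keys m \<union> Poly_Mapping.keys n"
  have f: "finite ?S" by simp
  have "mono \<sigma> (m + n) = (\<Prod>v\<in>?S. \<sigma> v ^ Poly_Mapping.lookup (m + n) v)"
    by (rule mono_superset[OF f keys_add])
  also have "\<dots> = (\<Prod>v\<in>?S. \<sigma> v ^ Poly_Mapping.lookup m v * \<sigma> v ^ Poly_Mapping.lookup n v)"
    by (simp add: lookup_add power_add)
  also have "\<dots> = mono \<sigma> m * mono \<sigma> n"
    by (simp add: prod.distrib mono_superset[OF f])
  finally show ?thesis .
qed

lemma mono_zero[simp]: "mono \<sigma> 0 = 1"
  by (simp add: mono_def)

lemma mono_single[simp]: "mono \<sigma> (Poly_Mapping.single v 1) = \<sigma> v"
  by (simp add: mono_def)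

lemma gsubst_single:
  assumes "ishom h"
  shows "gsubst h \<sigma> (Poly_Mapping.single m c) = h c * mono \<sigma> m"
  using assms by (cases "c = 0") (simp_all add: gsubst_def ishom_def)

lemma gsubst_zero[simp]: "gsubst h \<sigma> 0 = 0"
  by (simp add: gsubst_def)

lemma gsubst_add:
  assumes "ishom h"
  shows "gsubst h \<sigma> (f + g) = gsubst h \<sigma> f + gsubst h \<sigma> g"
  unfolding gsubst_def
  by (rule setsum_keys_plus_distrib) (use assms in \<open>simp_all add: ishom_def distrib_right\<close>)

lemma gsubst_sum:
  assumes "ishom h"
  shows "gsubst h \<sigma> (\<Sum>i\<in>I. f i) = (\<Sum>i\<in>I. gsubst h \<sigma> (f i))"
proof (induction I rule: infinite_finite_induct)
  case (insert x F)
  then show ?case by (simp add: gsubst_add[OF assms])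
qed simp_all

lemma poly_mapping_expand:
  "f = (\<Sum>m\<in>Poly_Mapping.keys f. Poly_Mapping.single m (Poly_Mapping.lookup f m))"
proof (rule poly_mapping_eqI)
  fix k
  show "Poly_Mapping.lookup f k = Poly_Mapping.lookup (\<Sum>m\<in>Poly_Mapping.keys f. Poly_Mapping.single m (Poly_Mapping.lookup f m)) k"
  proof (cases "k \<in> Poly_Mapping.keys f")
    case True
    then show ?thesis
      by (simp add: lookup_sum lookup_single when_def sum.delta)
  next
    case False
    then show ?thesis
      by (simp add: lookup_sum lookup_single when_def in_keys_iff)
  qed
qed

lemma gsubst_mult:
  assumes h: "ishom h"
  shows "gsubst h \<sigma> (f * g) = gsubst h \<sigma> f * gsubst h \<sigma> g"
proof -
  have "f * g = (\<Sum>m\<in>Poly_Mapping.keys f. Poly_Mapping.single m (Poly_Mapping.lookup f m)) *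
                (\<Sum>n\<in>Poly_Mapping.keys g. Poly_Mapping.single n (Poly_Mapping.lookup g n))"
    using poly_mapping_expand[of f] poly_mapping_expand[of g] by simp
  also have "\<dots> = (\<Sum>m\<in>Poly_Mapping.keys f. \<Sum>n\<in>Poly_Mapping.keys g.
      Poly_Mapping.single (m + n) (Poly_Mapping.lookup f m * Poly_Mapping.lookup g n))"
    apply (simp add: sum_distrib_left sum_distrib_right mult_single)
    apply (rule sum.swap)
    done
  finally have fg: "f * g = \<dots>" .
  have "gsubst h \<sigma> (f * g) = (\<Sum>m\<in>Poly_Mapping.keys f. \<Sum>n\<in>Poly_Mapping.keys g.
      h (Poly_Mapping.lookup f m * Poly_Mapping.lookup g n) * mono \<sigma> (m + n))"
    unfolding fg by (simp add: gsubst_sum[OF h] gsubst_single[OF h])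
  also have "\<dots> = (\<Sum>m\<in>Poly_Mapping.keys f. \<Sum>n\<in>Poly_Mapping.keys g.
      (h (Poly_Mapping.lookup f m) * mono \<sigma> m) * (h (Poly_Mapping.lookup g n) * mono \<sigma> n))"
    using h by (simp add: ishom_def mono_add mult_ac)
  also have "\<dots> = gsubst h \<sigma> f * gsubst h \<sigma> g"
    by (simp add: gsubst_def sum_product)
  finally show ?thesis .
qed

lemma gsubst_one:
  assumes "ishom h"
  shows "gsubst h \<sigma> 1 = 1"
  using gsubst_single[OF assms, of \<sigma> 0 1] assms by (simp add: ishom_def)

lemma gsubst_Const:
  assumes "ishom h"
  shows "gsubst h \<sigma> (Const c) = h c"
  using gsubst_single[OF assms, of \<sigma> 0 c] by (simp add: Const_def)

lemma gsubst_Var: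
  assumes "ishom h"
  shows "gsubst h \<sigma> (Var v) = \<sigma> v"
  using gsubst_single[OF assms, of \<sigma> "Poly_Mapping.single v 1" 1] assms by (simp add: Var_def ishom_def mono_def)

lemma gsubst_uminus:
  assumes "ishom h"
  shows "gsubst h \<sigma> (- f) = - gsubst h \<sigma> f"
proof -
  have "gsubst h \<sigma> (- f) + gsubst h \<sigma> f = 0"
    using gsubst_add[OF assms, of \<sigma> "- f" f] by simp
  then show ?thesis by (simp add: eq_neg_iff_add_eq_0)
qed

lemma gsubst_diff:
  assumes "ishom h"
  shows "gsubst h \<sigma> (f - g) = gsubst h \<sigma> f - gsubst h \<sigma> g"
  using gsubst_add[OF assms, of \<sigma> f "- g"] gsubst_uminus[OF assms, of \<sigma> g] by simp

lemma gsubst_power: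
  assumes "ishom h"
  shows "gsubst h \<sigma> (f ^ n) = gsubst h \<sigma> f ^ n"
  by (induction n) (simp_all add: gsubst_one[OF assms] gsubst_mult[OF assms])

lemma gsubst_hh:
  assumes "ishom h"
  shows "gsubst h \<sigma> (hh L m) = hh (map (gsubst h \<sigma>) L) m"
proof (induction L arbitrary: m)
  case Nil
  then show ?case by (simp add: gsubst_one[OF assms])
next
  case (Cons x L)
  then show ?case
    by (simp add: hh.simps gsubst_sum[OF assms] gsubst_mult[OF assms] gsubst_power[OF assms])
qed

lemma gsubst_DD:
  assumes "ishom h"
  shows "gsubst h \<sigma> (DD b d k L) = DD (\<lambda>j. gsubst h \<sigma> (b j)) d k (map (gsubst h \<sigma>) L)"
  unfolding DD_def gsubst_sum[OF assms]
  by (intro sum.cong refl) (simp add: gsubst_mult[OF assms] gsubst_hh[OF assms])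

lemma gsubst_neg1_power:
  assumes "ishom h"
  shows "gsubst h \<sigma> ((-1) ^ k) = (-1) ^ k"
  by (simp add: gsubst_power[OF assms] gsubst_uminus[OF assms] gsubst_one[OF assms])




fun venc :: "var \<Rightarrow> nat" where
  "venc (A a b) = prod_encode (0, prod_encode (a, b))"
| "venc (X k) = prod_encode (1, k)"

lemma inj_venc: "inj venc"
proof (rule injI)
  fix x y assume "venc x = venc y"
  then show "x = y"
    by (cases x; cases y) (auto dest!: inj_onD[OF inj_prod_encode, rotated 2])
qed

instantiation var :: linorder
begin
definition less_eq_var :: "var \<Rightarrow> var \<Rightarrow> bool" where "less_eq_var x y \<longleftrightarrow> venc x \<le> venc y"
definition less_var :: "var \<Rightarrow> var \<Rightarrow> bool" where "less_var x y \<longleftrightarrow> venc x < venc y"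
instance
proof
  fix x y z :: var
  show "(x < y) = (x \<le> y \<and> \<not> y \<le> x)" by (auto simp: less_eq_var_def less_var_def)
  show "x \<le> x" by (simp add: less_eq_var_def)
  show "x \<le> y \<Longrightarrow> y \<le> z \<Longrightarrow> x \<le> z" by (simp add: less_eq_var_def)
  show "x \<le> y \<Longrightarrow> y \<le> x \<Longrightarrow> x = y" using inj_venc by (simp add: less_eq_var_def inj_eq)
  show "x \<le> y \<or> y \<le> x" by (auto simp: less_eq_var_def)
qed
end

lemma mpoly_idom_test: "(p :: mpoly) * q = 0 \<Longrightarrow> p = 0 \<or> q = 0"
  by simp

definition bbv :: "nat \<Rightarrow> nat \<Rightarrow> mpoly" where
  "bbv d j = (\<Sum>i\<le>d. Var (acoef i j) * Var (X 0) ^ i)"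

definition xsv :: "nat \<Rightarrow> mpoly list" where
  "xsv k = map (\<lambda>i. Var (X i)) (rev [1..<k+2])"

definition GG :: "nat \<Rightarrow> nat \<Rightarrow> mpoly" where
  "GG d k = (-1) ^ k * DD (bbv d) d k (xsv k)"

lemma Var_inj: "Var v = Var w \<longleftrightarrow> v = w"
proof
  assume "Var v = Var w"
  then have "Poly_Mapping.lookup (Var v) (Poly_Mapping.single v 1) = Poly_Mapping.lookup (Var w) (Poly_Mapping.single v 1)" by simp
  then have "Poly_Mapping.single w 1 = Poly_Mapping.single v (1::nat)"
    by (simp add: Var_def lookup_single when_def split: if_splits)
  then have "Poly_Mapping.lookup (Poly_Mapping.single w 1) v = (1::nat)" by simp
  then show "v = w" by (simp add: lookup_single when_def split: if_splits)
qed simp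

lemma xsv_Suc: "xsv k = Var (X (Suc k)) # map (\<lambda>i. Var (X i)) (rev [1..<Suc k])"
  by (simp add: xsv_def)

lemma psubst_bbv:
  assumes "\<And>i j. \<sigma> (acoef i j) = Var (acoef i j)" "\<sigma> (X 0) = Var (X 0)"
  shows "psubst \<sigma> (bbv d j) = bbv d j"
  unfolding psubst_gsubst bbv_def
  by (simp add: gsubst_sum[OF ishom_Const] gsubst_mult[OF ishom_Const] gsubst_power[OF ishom_Const]
      gsubst_Var[OF ishom_Const] assms)

lemma PhiF_GG: "PhiF d k = GG d k"
proof (induction k)
  case 0
  have "GG d 0 = (\<Sum>j\<le>d. (\<Sum>i\<le>d. Var (acoef i j) * Var (X 0) ^ i) * Var (X 1) ^ j)"
    by (simp add: GG_def DD_def xsv_def bbv_def)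
  also have "\<dots> = (\<Sum>j\<le>d. \<Sum>i\<le>d. Var (acoef i j) * Var (X 0) ^ i * Var (X 1) ^ j)"
    by (simp add: sum_distrib_right)
  also have "\<dots> = PhiPoly d (Var (X 0)) (Var (X 1))"
    unfolding PhiPoly_def by (rule sum.swap)
  finally show ?case by simp
next
  case (Suc k)
  define \<sigma> where "\<sigma> = Var(X (k + 1) := Var (X (k + 2)))"
  define R where "R = map (\<lambda>i. Var (X i)) (rev [1..<Suc k])"
  have s1: "\<And>i j. \<sigma> (acoef i j) = Var (acoef i j)" by (simp add: \<sigma>_def acoef_def)
  have s2: "\<sigma> (X 0) = Var (X 0)" by (simp add: \<sigma>_def)
  have xk: "xsv k = Var (X (Suc k)) # R" by (simp add: xsv_Suc R_def)
  have xk1: "xsv (Suc k) = Var (X (Suc (Suc k))) # Var (X (Suc k)) # R"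
    by (simp add: xsv_Suc R_def)
  have bb: "(\<lambda>j. gsubst Const \<sigma> (bbv d j)) = bbv d"
    using psubst_bbv[OF s1 s2] by (simp add: psubst_gsubst)
  have mR': "map (gsubst Const \<sigma>) R = R"
    unfolding R_def by (auto simp: gsubst_Var[OF ishom_Const] \<sigma>_def)
  have vk: "gsubst Const \<sigma> (Var (X (Suc k))) = Var (X (Suc (Suc k)))"
    by (simp add: gsubst_Var[OF ishom_Const] \<sigma>_def)
  have ps: "psubst \<sigma> (GG d k) = (-1) ^ k * DD (bbv d) d k (Var (X (Suc (Suc k))) # R)"
    unfolding GG_def psubst_gsubst
    by (simp add: gsubst_mult[OF ishom_Const] gsubst_neg1_power[OF ishom_Const]
        gsubst_DD[OF ishom_Const] bb xk mR' vk)
  have "GG d k - psubst \<sigma> (GG d k) = (-1) ^ k * (DD (bbv d) d k (Var (X (Suc k)) # R) - DD (bbv d) d k (Var (X (Suc (Suc k))) # R))"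
    unfolding ps by (simp add: GG_def xk right_diff_distrib)
  also have "\<dots> = (-1) ^ k * ((Var (X (Suc k)) - Var (X (Suc (Suc k)))) * DD (bbv d) d (Suc k) (Var (X (Suc k)) # Var (X (Suc (Suc k))) # R))"
    by (simp only: DD_diff)
  also have "\<dots> = GG d (Suc k) * (Var (X (k + 2)) - Var (X (k + 1)))"
  proof -
    have "DD (bbv d) d (Suc k) (Var (X (Suc k)) # Var (X (Suc (Suc k))) # R) = DD (bbv d) d (Suc k) (xsv (Suc k))"
      unfolding xk1 by (rule DD_mset) simp
    then show ?thesis by (simp add: GG_def algebra_simps)
  qed
  finally have eq: "GG d (Suc k) * (Var (X (k + 2)) - Var (X (k + 1))) = GG d k - psubst \<sigma> (GG d k)" by simp
  have nz: "Var (X (k + 2)) - Var (X (k + 1)) \<noteq> 0" by (simp add: Var_inj)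
  have "PhiF d (Suc k) = (THE q. q * (Var (X (k + 2)) - Var (X (k + 1))) = GG d k - psubst \<sigma> (GG d k))"
    by (simp add: Suc.IH \<sigma>_def)
  also have "\<dots> = GG d (Suc k)"
  proof (rule the_equality)
    show "GG d (Suc k) * (Var (X (k + 2)) - Var (X (k + 1))) = GG d k - psubst \<sigma> (GG d k)" by (rule eq)
    fix q assume "q * (Var (X (k + 2)) - Var (X (k + 1))) = GG d k - psubst \<sigma> (GG d k)"
    with eq have "q * (Var (X (k + 2)) - Var (X (k + 1))) = GG d (Suc k) * (Var (X (k + 2)) - Var (X (k + 1)))" by simp
    with nz show "q = GG d (Suc k)" by simp
  qed
  finally show ?case .
qed




lemma GG_sym:
  assumes "\<pi> permutes {1..Suc k}"
  shows "psubst (\<lambda>v. case v of A a b \<Rightarrow> Var (A a b) | X k \<Rightarrow> Var (X (\<pi> k))) (GG d k) = GG d k"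
proof -
  define \<sigma> where "\<sigma> = (\<lambda>v. case v of A a b \<Rightarrow> Var (A a b) | X k \<Rightarrow> Var (X (\<pi> k)))"
  have p0: "\<pi> 0 = 0" using permutes_not_in[OF assms] by simp
  have s1: "\<And>i j. \<sigma> (acoef i j) = Var (acoef i j)" by (simp add: \<sigma>_def acoef_def)
  have s2: "\<sigma> (X 0) = Var (X 0)" by (simp add: \<sigma>_def p0)
  have bb: "(\<lambda>j. gsubst Const \<sigma> (bbv d j)) = bbv d"
    using psubst_bbv[OF s1 s2] by (simp add: psubst_gsubst)
  define xs where "xs = rev [1..<k+2]"
  have mx: "map (gsubst Const \<sigma>) (xsv k) = map (\<lambda>i. Var (X i)) (map \<pi> xs)"
    by (simp add: xsv_def xs_def gsubst_Var[OF ishom_Const] \<sigma>_def)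
  have "mset (map \<pi> xs) = mset xs"
  proof -
    have "inj_on \<pi> (set xs)" using permutes_inj[OF assms] by (simp add: inj_on_def inj_def)
    then have "distinct (map \<pi> xs)"
      by (simp add: distinct_map xs_def)
    moreover have "distinct xs" by (simp add: xs_def)
    moreover have "set (map \<pi> xs) = set xs"
    proof -
      have "set xs = {1..Suc k}" by (auto simp: xs_def)
      then show ?thesis using permutes_image[OF assms] by simp
    qed
    ultimately show ?thesis using set_eq_iff_mset_eq_distinct[of "map \<pi> xs" xs] by simp
  qed
  then have "mset (map (\<lambda>i. Var (X i)) (map \<pi> xs)) = mset (map (\<lambda>i. Var (X i)) xs)"
    by (metis mset_map)
  moreover have "xsv k = map (\<lambda>i. Var (X i)) xs" by (simp add: xsv_def xs_def)
  ultimately have "mset (map (gsubst Const \<sigma>) (xsv k)) = mset (xsv k)"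
    unfolding mx by simp
  then have "DD (bbv d) d k (map (gsubst Const \<sigma>) (xsv k)) = DD (bbv d) d k (xsv k)"
    by (rule DD_mset)
  then show ?thesis
    unfolding \<sigma>_def[symmetric] GG_def psubst_gsubst
    by (simp add: gsubst_mult[OF ishom_Const] gsubst_neg1_power[OF ishom_Const]
        gsubst_DD[OF ishom_Const] bb)
qed




lemma xdegm_superset:
  assumes "finite S" "Poly_Mapping.keys m \<subseteq> S"
  shows "xdegm m = (\<Sum>v\<in>S. (case v of X _ \<Rightarrow> Poly_Mapping.lookup m v | A _ _ \<Rightarrow> 0))"
  unfolding xdegm_def
  by (rule sum.mono_neutral_left[OF assms]) (auto simp: in_keys_iff split: var.split)

lemma xdegm_add: "xdegm (a + b) = xdegm a + xdegm b"
proof -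
  let ?S = "Poly_Mapping.keys a \<union> Poly_Mapping.keys b"
  have f: "finite ?S" by simp
  have "xdegm (a + b) = (\<Sum>v\<in>?S. (case v of X _ \<Rightarrow> Poly_Mapping.lookup (a + b) v | A _ _ \<Rightarrow> 0))"
    by (rule xdegm_superset[OF f keys_add])
  also have "\<dots> = (\<Sum>v\<in>?S. (case v of X _ \<Rightarrow> Poly_Mapping.lookup a v | A _ _ \<Rightarrow> 0) + (case v of X _ \<Rightarrow> Poly_Mapping.lookup b v | A _ _ \<Rightarrow> 0))"
    by (rule sum.cong) (auto simp: lookup_add split: var.split)
  also have "\<dots> = xdegm a + xdegm b"
    by (simp add: sum.distrib xdegm_superset[OF f])
  finally show ?thesis .
qed

lemma xdegm_0[simp]: "xdegm 0 = 0" by (simp add: xdegm_def)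

definition homd :: "nat \<Rightarrow> mpoly \<Rightarrow> bool" where
  "homd D p \<longleftrightarrow> (\<forall>m\<in>Poly_Mapping.keys p. xdegm m = D)"

definition degle :: "nat \<Rightarrow> mpoly \<Rightarrow> bool" where
  "degle D p \<longleftrightarrow> (\<forall>m\<in>Poly_Mapping.keys p. xdegm m \<le> D)"

lemma homd_mult: "homd D1 p \<Longrightarrow> homd D2 q \<Longrightarrow> D = D1 + D2 \<Longrightarrow> homd D (p * q)"
  unfolding homd_def using keys_mult[of p q] by (force simp: xdegm_add)

lemma homd_add: "homd D p \<Longrightarrow> homd D q \<Longrightarrow> homd D (p + q)"
  unfolding homd_def using keys_add[of p q] by blast

lemma homd_zero[simp]: "homd D 0" by (simp add: homd_def)

lemma homd_one: "homd 0 1" by (simp add: homd_def)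

lemma homd_sum: "(\<And>i. i \<in> I \<Longrightarrow> homd D (f i)) \<Longrightarrow> homd D (\<Sum>i\<in>I. f i)"
proof (induction I rule: infinite_finite_induct)
  case (insert x F)
  then show ?case by (simp add: homd_add)
qed simp_all

lemma homd_VarX: "homd 1 (Var (X i))"
  by (simp add: homd_def Var_def xdegm_def)

lemma homd_VarA: "homd 0 (Var (A a b))"
  by (simp add: homd_def Var_def xdegm_def)

lemma homd_power: "homd D p \<Longrightarrow> homd (n * D) (p ^ n)"
  by (induction n) (auto simp: homd_one intro: homd_mult)

lemma homd_hh: "(\<And>x. x \<in> set L \<Longrightarrow> homd 1 x) \<Longrightarrow> homd m (hh L m)"
proof (induction L arbitrary: m)
  case Nil
  then show ?case by (simp add: homd_one)
next
  case (Cons x L)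
  have hx: "homd 1 x" using Cons.prems by simp
  have hL: "\<And>m. homd m (hh L m)" using Cons by simp
  show ?case unfolding hh.simps
  proof (rule homd_sum)
    fix i assume "i \<in> {..m}"
    then show "homd m (x ^ i * hh L (m - i))"
      using homd_power[OF hx, of i] hL[of "m - i"] by (auto intro: homd_mult)
  qed
qed

lemma degle_homd: "homd D p \<Longrightarrow> D \<le> D' \<Longrightarrow> degle D' p"
  unfolding homd_def degle_def by auto

lemma degle_add: "degle D p \<Longrightarrow> degle D q \<Longrightarrow> degle D (p + q)"
  unfolding degle_def using keys_add[of p q] by blast

lemma degle_sum: "(\<And>i. i \<in> I \<Longrightarrow> degle D (f i)) \<Longrightarrow> degle D (\<Sum>i\<in>I. f i)"
proof (induction I rule: infinite_finite_induct)
  case (insert x F)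
  then show ?case by (simp add: degle_add)
qed (simp_all add: degle_def)


lemma hh_of_int: "hh (map of_int xs) m = (of_int (hh xs m) :: 'a::comm_ring_1)"
  by (induction xs arbitrary: m) (simp_all add: hh.simps)

lemma hh_nonneg: "hh (replicate n (1::int)) m \<ge> 0"
  by (induction n arbitrary: m) (simp_all add: hh.simps sum_nonneg)

lemma hh_pos: "hh (replicate (Suc n) (1::int)) m \<ge> 1"
proof -
  have "hh (replicate (Suc n) (1::int)) m = (\<Sum>i\<le>m. hh (replicate n 1) (m - i))"
    by (simp add: hh.simps)
  also have "\<dots> \<ge> hh (replicate n 1) (m - m)"
    by (rule member_le_sum) (simp_all add: hh_nonneg)
  finally show ?thesis by simp
qed

lemma hh_ones_nz: "hh (replicate (Suc n) (1::complex)) m \<noteq> 0"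
proof -
  have "hh (replicate (Suc n) (1::complex)) m = hh (map of_int (replicate (Suc n) (1::int))) m"
    by simp
  also have "\<dots> = of_int (hh (replicate (Suc n) (1::int)) m)" by (rule hh_of_int)
  finally show ?thesis using hh_pos[of n m] by simp
qed

lemma xdeg_GG:
  assumes "k < d"
  shows "xdeg (GG d k) = 2 * d - k"
proof -
  define L where "L = xsv k"
  have hL: "\<And>x. x \<in> set L \<Longrightarrow> homd 1 x" unfolding L_def xsv_def using homd_VarX by auto
  define T where "T = (\<lambda>i j. Var (acoef i j) * Var (X 0) ^ i * hh L (j - k))"
  define U where "U = (\<lambda>p. if k \<le> snd p then T (fst p) (snd p) else 0)"
  define I where "I = {..d} \<times> {..d}"
  define S where "S = DD (bbv d) d k L"
  have hT: "homd (i + (j - k)) (T i j)" for i j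
  proof -
    have a: "homd 0 (Var (acoef i j))" by (simp add: acoef_def homd_VarA)
    have b: "homd i (Var (X 0) ^ i)" using homd_power[OF homd_VarX, of i] by simp
    have c: "homd (j - k) (hh L (j - k))" by (rule homd_hh) (rule hL)
    have ab: "homd i (Var (acoef i j) * Var (X 0) ^ i)" by (rule homd_mult[OF a b]) simp
    show ?thesis unfolding T_def by (rule homd_mult[OF ab c]) simp
  qed
  have SU: "S = (\<Sum>p\<in>I. U p)"
  proof -
    have "S = (\<Sum>j\<le>d. \<Sum>i\<le>d. if k \<le> j then T i j else 0)"
      unfolding S_def DD_def bbv_def T_def
      by (rule sum.cong) (simp_all add: sum_distrib_right)
    also have "\<dots> = (\<Sum>i\<le>d. \<Sum>j\<le>d. if k \<le> j then T i j else 0)" by (rule sum.swap)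
    also have "\<dots> = (\<Sum>p\<in>I. U p)"
      unfolding I_def U_def by (simp add: sum.cartesian_product split_beta)
    finally show ?thesis .
  qed
  have dI: "(d, d) \<in> I" by (simp add: I_def)
  define R where "R = (\<Sum>p\<in>I - {(d, d)}. U p)"
  have SR: "S = T d d + R"
    unfolding SU R_def using sum.remove[OF _ dI, of U] assms by (simp add: I_def U_def)
  have hTdd: "homd (2 * d - k) (T d d)"
    using hT[of d d] assms by (simp add: mult_2)
  have dR: "degle (2 * d - k - 1) R"
    unfolding R_def
  proof (rule degle_sum)
    fix p assume p: "p \<in> I - {(d, d)}"
    obtain i j where pij: "p = (i, j)" by (cases p)
    have ij: "i \<le> d" "j \<le> d" "(i, j) \<noteq> (d, d)" using p pij by (auto simp: I_def)
    show "degle (2 * d - k - 1) (U p)"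
    proof (cases "k \<le> j")
      case True
      have "i + (j - k) \<le> 2 * d - k - 1" using ij True by auto
      then show ?thesis using hT[of i j] True pij by (simp add: U_def degle_homd)
    next
      case False
      then show ?thesis by (simp add: U_def pij degle_def)
    qed
  qed
  have Tnz: "T d d \<noteq> 0"
  proof
    assume "T d d = 0"
    then have "peval (\<lambda>_. 1) (T d d) = 0" by (simp add: peval_def)
    moreover have "peval (\<lambda>_. 1) (T d d) = hh (replicate (Suc k) 1) (d - k)"
    proof -
      have "map (gsubst (\<lambda>x. x) (\<lambda>_. 1)) L = map (\<lambda>_. 1) L"
        by (auto simp: L_def xsv_def gsubst_Var[OF ishom_id])
      also have "\<dots> = replicate (Suc k) 1"
        by (simp only: map_replicate_const) (simp add: L_def xsv_def)
      finally have "map (gsubst (\<lambda>x. x) (\<lambda>_. 1)) L = replicate (Suc k) 1" .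
      then show ?thesis
        unfolding T_def peval_gsubst
        by (simp add: gsubst_mult[OF ishom_id] gsubst_power[OF ishom_id] gsubst_Var[OF ishom_id]
            gsubst_hh[OF ishom_id])
    qed
    ultimately show False using hh_ones_nz by simp
  qed
  then obtain m0 where m0: "m0 \<in> Poly_Mapping.keys (T d d)"
    using keys_eq_empty by blast
  have xm0: "xdegm m0 = 2 * d - k" using hTdd m0 by (simp add: homd_def)
  have "m0 \<notin> Poly_Mapping.keys R"
    using dR xm0 assms unfolding degle_def by fastforce
  then have "Poly_Mapping.lookup S m0 = Poly_Mapping.lookup (T d d) m0"
    by (simp add: SR lookup_add in_keys_iff)
  then have m0S: "m0 \<in> Poly_Mapping.keys S" using m0 by (simp add: in_keys_iff)
  have leS: "\<And>m. m \<in> Poly_Mapping.keys S \<Longrightarrow> xdegm m \<le> 2 * d - k"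
  proof -
    fix m assume "m \<in> Poly_Mapping.keys S"
    then have "m \<in> Poly_Mapping.keys (T d d) \<or> m \<in> Poly_Mapping.keys R"
      using keys_add[of "T d d" R] SR by blast
    then show "xdegm m \<le> 2 * d - k"
      using hTdd dR unfolding homd_def degle_def by fastforce
  qed
  have xS: "xdeg S = 2 * d - k"
    unfolding xdeg_def
  proof (rule Max_eqI)
    show "2 * d - k \<in> xdegm ` Poly_Mapping.keys S" using m0S xm0 by (metis image_eqI)
  qed (use leS in auto)
  have "Poly_Mapping.keys (GG d k) = Poly_Mapping.keys S"
    by (cases "even k") (simp_all add: GG_def S_def L_def)
  then show ?thesis using xS by (simp add: xdeg_def)
qed




definition pin :: "var set \<Rightarrow> mpoly \<Rightarrow> bool" where
  "pin V p \<longleftrightarrow> pvars p \<subseteq> V"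

lemma pin_add: "pin V p \<Longrightarrow> pin V q \<Longrightarrow> pin V (p + q)"
  unfolding pin_def pvars_def using keys_add[of p q] by blast

lemma pin_mult: "pin V p \<Longrightarrow> pin V q \<Longrightarrow> pin V (p * q)"
  unfolding pin_def pvars_def
proof
  fix v assume p: "(\<Union>m\<in>Poly_Mapping.keys p. Poly_Mapping.keys m) \<subseteq> V"
    and q: "(\<Union>m\<in>Poly_Mapping.keys q. Poly_Mapping.keys m) \<subseteq> V"
    and v: "v \<in> (\<Union>m\<in>Poly_Mapping.keys (p * q). Poly_Mapping.keys m)"
  then obtain m where m: "m \<in> Poly_Mapping.keys (p * q)" "v \<in> Poly_Mapping.keys m" by blast
  then obtain a b where "m = a + b" "a \<in> Poly_Mapping.keys p" "b \<in> Poly_Mapping.keys q"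
    using keys_mult[of p q] by blast
  then show "v \<in> V" using m(2) keys_add[of a b] p q by blast
qed

lemma pin_zero[simp]: "pin V 0" by (simp add: pin_def pvars_def)
lemma pin_one[simp]: "pin V 1" by (simp add: pin_def pvars_def)
lemma pin_uminus: "pin V p \<Longrightarrow> pin V (- p)" by (simp add: pin_def pvars_def)
lemma pin_Var: "v \<in> V \<Longrightarrow> pin V (Var v)" by (simp add: pin_def pvars_def Var_def)

lemma pin_sum: "(\<And>i. i \<in> I \<Longrightarrow> pin V (f i)) \<Longrightarrow> pin V (\<Sum>i\<in>I. f i)"
proof (induction I rule: infinite_finite_induct)
  case (insert x F)
  then show ?case by (simp add: pin_add)
qed simp_all

lemma pin_power: "pin V p \<Longrightarrow> pin V (p ^ n)"
  by (induction n) (simp_all add: pin_mult)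

lemma pin_hh: "(\<And>x. x \<in> set L \<Longrightarrow> pin V x) \<Longrightarrow> pin V (hh L m)"
proof (induction L arbitrary: m)
  case Nil
  then show ?case by simp
next
  case (Cons x L)
  show ?case unfolding hh.simps
    by (rule pin_sum) (use Cons in \<open>simp add: pin_mult pin_power\<close>)
qed

lemma pin_DD: "(\<And>j. j \<le> d \<Longrightarrow> pin V (b j)) \<Longrightarrow> (\<And>x. x \<in> set L \<Longrightarrow> pin V x) \<Longrightarrow> pin V (DD b d k L)"
  unfolding DD_def by (rule pin_sum) (simp add: pin_mult pin_hh)

lemma peval_PhiPoly:
  "peval q (PhiPoly d (Var (X a)) (Var (X b))) = DD (\<lambda>jj. \<Sum>i\<le>d. q (acoef i jj) * q (X a) ^ i) d 0 [q (X b)]"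
proof -
  have "peval q (PhiPoly d (Var (X a)) (Var (X b))) = (\<Sum>i\<le>d. \<Sum>jj\<le>d. q (acoef i jj) * q (X a) ^ i * q (X b) ^ jj)"
    unfolding PhiPoly_def peval_gsubst
    by (simp add: gsubst_sum[OF ishom_id] gsubst_mult[OF ishom_id] gsubst_power[OF ishom_id] gsubst_Var[OF ishom_id])
  also have "\<dots> = (\<Sum>jj\<le>d. \<Sum>i\<le>d. q (acoef i jj) * q (X a) ^ i * q (X b) ^ jj)" by (rule sum.swap)
  also have "\<dots> = DD (\<lambda>jj. \<Sum>i\<le>d. q (acoef i jj) * q (X a) ^ i) d 0 [q (X b)]"
    by (simp add: DD_single sum_distrib_right)
  finally show ?thesis .
qed

lemma part_i:
  fixes nb :: "nat \<Rightarrow> nat"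
  assumes edges_in: "\<And>a b. E a b \<Longrightarrow> a \<in> {1..n} \<and> b \<in> {1..n}"
    and i0: "i0 \<in> {1..n}"
    and l: "1 \<le> l"
    and j_inj: "inj_on nb {1..l}"
    and j_nb: "\<And>k. k \<in> {1..l} \<Longrightarrow> E i0 (nb k)"
  shows "psubst (\<lambda>v. case v of A a b \<Rightarrow> Var (A a b)
                   | X k \<Rightarrow> (if k = 0 then Var (X i0) else Var (X (nb k))))
        (PhiF d (l - 1)) \<in> vanI d n (UH d n E)"
proof -
  define k where "k = l - 1"
  have lk: "l = Suc k" using l by (simp add: k_def)
  define \<tau> where "\<tau> = (\<lambda>v. case v of A a b \<Rightarrow> Var (A a b)
                   | X k \<Rightarrow> (if k = 0 then Var (X i0) else Var (X (nb k))))"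
  define bt where "bt = (\<lambda>jj. \<Sum>i\<le>d. Var (acoef i jj) * Var (X i0) ^ i)"
  define Lt where "Lt = map (\<lambda>i. Var (X (nb i))) (rev [1..<k+2])"
  have bb: "(\<lambda>jj. gsubst Const \<tau> (bbv d jj)) = bt"
    unfolding bbv_def bt_def
    by (simp add: gsubst_sum[OF ishom_Const] gsubst_mult[OF ishom_Const] gsubst_power[OF ishom_Const]
      gsubst_Var[OF ishom_Const] \<tau>_def acoef_def)
  have mL: "map (gsubst Const \<tau>) (xsv k) = Lt"
    unfolding xsv_def Lt_def by (auto simp: gsubst_Var[OF ishom_Const] \<tau>_def)
  define F where "F = (-1) ^ k * DD bt d k Lt"
  have F: "psubst \<tau> (PhiF d (l - 1)) = F"
    unfolding PhiF_GG GG_def psubst_gsubst F_def k_def[symmetric]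
    by (simp add: gsubst_mult[OF ishom_Const] gsubst_neg1_power[OF ishom_Const] gsubst_DD[OF ishom_Const] bb mL)
  have sl: "set (rev [1..<k+2]) = {1..l}" by (auto simp: lk)
  have nbn: "\<And>i. i \<in> {1..l} \<Longrightarrow> nb i \<in> {1..n}" using j_nb edges_in by blast
  have polyF: "F \<in> polys d n"
  proof -
    have "pin (relvars d n) F"
      unfolding F_def
    proof (rule pin_mult)
      show "pin (relvars d n) ((-1) ^ k)" by (simp add: pin_power pin_uminus)
      show "pin (relvars d n) (DD bt d k Lt)"
      proof (rule pin_DD)
        fix jj assume jj: "jj \<le> d"
        show "pin (relvars d n) (bt jj)"
          unfolding bt_def
        proof (rule pin_sum)
          fix i assume i: "i \<in> {..d}"
          have "acoef i jj \<in> relvars d n"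
            using jj i by (auto simp: acoef_def relvars_def)
          moreover have "X i0 \<in> relvars d n" using i0 by (simp add: relvars_def)
          ultimately show "pin (relvars d n) (Var (acoef i jj) * Var (X i0) ^ i)"
            by (simp add: pin_mult pin_power pin_Var)
        qed
      next
        fix x assume "x \<in> set Lt"
        then have "x \<in> (\<lambda>i. Var (X (nb i))) ` {1..l}" unfolding Lt_def set_map sl .
        then obtain i where "i \<in> {1..l}" "x = Var (X (nb i))" by blast
        then show "pin (relvars d n) x" using nbn by (auto simp: relvars_def intro!: pin_Var)
      qed
    qed
    then show ?thesis by (simp add: pin_def polys_def)
  qed
  have van: "peval q F = 0" if q: "q \<in> WH d n E - ZH d n E" for q
  proof -
    define bq where "bq = (\<lambda>jj. \<Sum>i\<le>d. q (acoef i jj) * q (X i0) ^ i)"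
    define Lq where "Lq = map (\<lambda>i. q (X (nb i))) (rev [1..<k+2])"
    have pF: "peval q F = (-1) ^ k * DD bq d k Lq"
      unfolding F_def peval_gsubst bt_def bq_def Lt_def Lq_def
      by (simp add: gsubst_mult[OF ishom_id] gsubst_neg1_power[OF ishom_id] gsubst_DD[OF ishom_id]
          gsubst_sum[OF ishom_id] gsubst_power[OF ishom_id] gsubst_Var[OF ishom_id] comp_def
          gsubst_uminus[OF ishom_id] gsubst_one[OF ishom_id])
    have qW: "q \<in> WH d n E" and qZ: "q \<notin> ZH d n E" using q by auto
    have injq: "inj_on (\<lambda>i. q (X (nb i))) {1..l}"
    proof (rule inj_onI)
      fix a b assume a: "a \<in> {1..l}" and b: "b \<in> {1..l}" and eq: "q (X (nb a)) = q (X (nb b))"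
      have "nb a = nb b"
      proof (rule ccontr)
        assume ne: "nb a \<noteq> nb b"
        have ab: "nb a \<in> {1..n}" "nb b \<in> {1..n}" by (rule nbn[OF a], rule nbn[OF b])
        have ex: "\<exists>i\<in>{1..n}. \<exists>j\<in>{1..n}. i > j \<and> q (X i) = q (X j)"
        proof (cases "nb a > nb b")
          case True
          show ?thesis
            by (rule bexI[of _ "nb a"], rule bexI[of _ "nb b"]) (use ab eq True in simp_all)
        next
          case False
          then have "nb b > nb a" using ne by simp
          show ?thesis
            by (rule bexI[of _ "nb b"], rule bexI[of _ "nb a"]) (use ab eq \<open>nb b > nb a\<close> in simp_all)
        qed
        have "q \<in> ZH d n E" unfolding ZH_def using qW ex by (intro CollectI conjI)
        with qZ show False by contradiction
      qed
      then show "a = b" by (rule inj_onD[OF j_inj _ a b])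
    qed
    have "DD bq d k Lq = 0"
    proof (rule DD_zero_roots)
      show "length Lq = Suc k" by (simp add: Lq_def)
      show "distinct Lq" unfolding Lq_def distinct_map sl using injq by simp
      fix y assume "y \<in> set Lq"
      then have "y \<in> (\<lambda>i. q (X (nb i))) ` {1..l}" unfolding Lq_def set_map sl .
      then obtain i where i: "i \<in> {1..l}" "y = q (X (nb i))" by blast
      have "peval q (PhiPoly d (Var (X i0)) (Var (X (nb i)))) = 0"
        using qW j_nb[OF i(1)] unfolding WH_def by blast
      then show "DD bq d 0 [y] = 0" unfolding peval_PhiPoly bq_def i(2) .
    qed
    then show ?thesis using pF by simp
  qed
  have "F \<in> vanI d n (UH d n E)"
    unfolding vanI_def
  proof (rule CollectI, rule conjI[OF polyF], rule ballI)
    fix pt assume "pt \<in> UH d n E"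
    then show "peval pt F = 0"
      unfolding UH_def zclos_def using polyF van by blast
  qed
  then show ?thesis using F unfolding \<tau>_def by simp
qed




declare upt_Suc[simp del]

definition Qpoly :: "(nat \<Rightarrow> complex) \<Rightarrow> nat \<Rightarrow> nat \<Rightarrow> complex list \<Rightarrow> complex poly" where
  "Qpoly b d k L = (\<Sum>j\<le>d. if k \<le> j then (\<Sum>i\<le>j - k. monom (b j * hh L (j - k - i)) i) else 0)"

lemma poly_Qpoly: "poly (Qpoly b d k L) y = DD b d k (y # L)"
  unfolding Qpoly_def DD_def poly_sum
  by (intro sum.cong refl) (simp add: poly_sum poly_monom hh.simps sum_distrib_left mult_ac)

lemma coeff_Qpoly: "coeff (Qpoly b d k L) n = (\<Sum>j\<le>d. if k \<le> j \<and> n \<le> j - k then b j * hh L (j - k - n) else 0)"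
  unfolding Qpoly_def coeff_sum
proof (intro sum.cong refl)
  fix j
  show "coeff (if k \<le> j then \<Sum>i\<le>j - k. monom (b j * hh L (j - k - i)) i else 0) n =
      (if k \<le> j \<and> n \<le> j - k then b j * hh L (j - k - n) else 0)"
  proof (cases "k \<le> j")
    case True
    have "(\<Sum>i\<le>j - k. coeff (monom (b j * hh L (j - k - i)) i) n) = (\<Sum>i\<le>j - k. if i = n then b j * hh L (j - k - n) else 0)"
      by (intro sum.cong refl) auto
    also have "\<dots> = (if n \<le> j - k then b j * hh L (j - k - n) else 0)"
      by (simp add: sum.delta)
    finally show ?thesis using True by (simp add: coeff_sum)
  qed simp
qed

lemma degree_Qpoly: "degree (Qpoly b d k L) \<le> d - k"
proof (rule degree_le, intro allI impI)
  fix n assume "d - k < n"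
  then show "coeff (Qpoly b d k L) n = 0"
    unfolding coeff_Qpoly by (intro sum.neutral) auto
qed

lemma coeff_Qpoly_top:
  assumes "k \<le> d"
  shows "coeff (Qpoly b d k L) (d - k) = b d"
proof -
  have "coeff (Qpoly b d k L) (d - k) = (\<Sum>j\<le>d. if j = d then b d else 0)"
    unfolding coeff_Qpoly using assms by (intro sum.cong refl) auto
  then show ?thesis by simp
qed

lemma part_iii_core:
  fixes b :: "nat \<Rightarrow> complex" and u x :: "nat \<Rightarrow> complex"
  assumes Z: "\<And>y. DD b d 0 [y] = 0 \<longleftrightarrow> y \<in> u ` {1..d}"
    and uinj: "inj_on u {1..d}"
    and bd: "b d \<noteq> 0"
  shows "(\<forall>k\<in>{1..d}. DD b d (k - 1) (map x (rev [1..<k+1])) = 0)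
     \<longleftrightarrow> (\<exists>\<pi>. \<pi> permutes {1..d} \<and> (\<forall>k\<in>{1..d}. x k = u (\<pi> k)))"
proof
  define R where "R = u ` {1..d}"
  have cR: "card R = d" using uinj by (simp add: R_def card_image)
  assume H: "\<forall>k\<in>{1..d}. DD b d (k - 1) (map x (rev [1..<k+1])) = 0"
  have ind: "inj_on x {1..k} \<and> x ` {1..k} \<subseteq> R" if "k \<le> d" for k
    using that
  proof (induction k)
    case 0
    then show ?case by simp
  next
    case (Suc k)
    then have IH: "inj_on x {1..k}" "x ` {1..k} \<subseteq> R" and kd: "Suc k \<le> d" by auto
    define L where "L = map x (rev [1..<k+1])"
    have sL: "set L = x ` {1..k}" by (auto simp: L_def)
    have dL: "distinct L" unfolding L_def distinct_map using IH(1) by (simp add: atLeastLessThanSuc_atLeastAtMost)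
    have lL: "length L = k" by (simp add: L_def)
    have cL: "card (set L) = k" using dL lL by (simp add: distinct_card)
    have LR: "set L \<subseteq> R" using sL IH(2) by simp
    have "DD b d (Suc k - 1) (map x (rev [1..<Suc k+1])) = 0" using bspec[OF H, of "Suc k"] kd by simp
    then have Hk: "DD b d k (x (Suc k) # L) = 0" by (simp add: L_def upt_Suc)
    define Q where "Q = Qpoly b d k L"
    have Qnz: "Q \<noteq> 0"
    proof
      assume "Q = 0"
      then have "coeff Q (d - k) = 0" by simp
      with coeff_Qpoly_top[of k d b L] kd bd show False by (simp add: Q_def)
    qed
    have rootsQ: "R - set L \<subseteq> {y. poly Q y = 0}"
    proof
      fix y assume y: "y \<in> R - set L"
      have "DD b d k (y # L) = 0"
      proof (rule DD_zero_roots)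
        show "length (y # L) = Suc k" using lL by simp
        show "distinct (y # L)" using dL y by simp
        fix z assume "z \<in> set (y # L)"
        then have "z \<in> R" using y LR by auto
        then show "DD b d 0 [z] = 0" using Z by (simp add: R_def)
      qed
      then show "y \<in> {y. poly Q y = 0}" by (simp add: Q_def poly_Qpoly)
    qed
    have fin: "finite {y. poly Q y = 0}" using poly_roots_finite[OF Qnz] .
    have c1: "card {y. poly Q y = 0} \<le> d - k"
      using card_poly_roots_bound[OF Qnz] degree_Qpoly[of b d k L] by (simp add: Q_def)
    have c2: "card (R - set L) = d - k"
      using LR cR cL by (simp add: card_Diff_subset)
    have eqR: "R - set L = {y. poly Q y = 0}"
      by (rule card_subset_eq[OF fin rootsQ]) (use c1 c2 card_mono[OF fin rootsQ] in simp)
    have "x (Suc k) \<in> {y. poly Q y = 0}" using Hk by (simp add: Q_def poly_Qpoly)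
    then have xR: "x (Suc k) \<in> R - set L" using eqR by simp
    have iv: "{1..Suc k} = insert (Suc k) {1..k}" by auto
    show ?case unfolding iv using IH xR sL by auto
  qed
  from ind[of d] have xi: "inj_on x {1..d}" and xs: "x ` {1..d} \<subseteq> R" by auto
  have xR: "x ` {1..d} = R"
    by (rule card_subset_eq) (use xs cR xi in \<open>simp_all add: R_def card_image\<close>)
  have bu: "bij_betw u {1..d} R" using uinj by (simp add: bij_betw_def R_def)
  have bx: "bij_betw x {1..d} R" using xi xR by (simp add: bij_betw_def)
  define \<pi> where "\<pi> = (\<lambda>k. if k \<in> {1..d} then the_inv_into {1..d} u (x k) else k)"
  have "bij_betw (the_inv_into {1..d} u \<circ> x) {1..d} {1..d}"
    by (rule bij_betw_trans[OF bx bij_betw_the_inv_into[OF bu]])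
  then have "bij_betw \<pi> {1..d} {1..d}"
    by (rule bij_betw_cong[THEN iffD1, rotated]) (simp add: \<pi>_def)
  then have pp: "\<pi> permutes {1..d}"
    by (rule bij_imp_permutes) (auto simp: \<pi>_def)
  have "\<forall>k\<in>{1..d}. x k = u (\<pi> k)"
  proof
    fix k assume k: "k \<in> {1..d}"
    then have "x k \<in> u ` {1..d}" using xR by (auto simp: R_def)
    then show "x k = u (\<pi> k)" using k f_the_inv_into_f[OF uinj] by (simp add: \<pi>_def)
  qed
  with pp show "\<exists>\<pi>. \<pi> permutes {1..d} \<and> (\<forall>k\<in>{1..d}. x k = u (\<pi> k))" by blast
next
  assume "\<exists>\<pi>. \<pi> permutes {1..d} \<and> (\<forall>k\<in>{1..d}. x k = u (\<pi> k))"
  then obtain \<pi> where pp: "\<pi> permutes {1..d}" and xu: "\<forall>k\<in>{1..d}. x k = u (\<pi> k)" by blast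
  have xi: "inj_on x {1..d}"
  proof (rule inj_onI)
    fix a b' assume a: "a \<in> {1..d}" and b: "b' \<in> {1..d}" and e: "x a = x b'"
    have "\<pi> a \<in> {1..d}" "\<pi> b' \<in> {1..d}" using a b permutes_in_image[OF pp] by auto
    then have "\<pi> a = \<pi> b'" using e xu a b uinj by (metis inj_onD)
    then show "a = b'" using permutes_inj[OF pp] by (metis injD)
  qed
  have xin: "x k \<in> u ` {1..d}" if "k \<in> {1..d}" for k
    using xu that permutes_in_image[OF pp] by auto
  show "\<forall>k\<in>{1..d}. DD b d (k - 1) (map x (rev [1..<k+1])) = 0"
  proof
    fix k assume k: "k \<in> {1..d}"
    show "DD b d (k - 1) (map x (rev [1..<k+1])) = 0"
    proof (rule DD_zero_roots)
      show "length (map x (rev [1..<k + 1])) = Suc (k - 1)" using k by simp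
      have "inj_on x {1..k}" using xi k by (auto intro: inj_on_subset)
      then show "distinct (map x (rev [1..<k + 1]))"
        by (simp add: distinct_map atLeastLessThanSuc_atLeastAtMost)
      fix y assume "y \<in> set (map x (rev [1..<k + 1]))"
      then obtain i where "i \<in> {1..<k+1}" "y = x i" by auto
      then have "i \<in> {1..k}" "y = x i" by auto
      then show "DD b d 0 [y] = 0" using Z xin k by auto
    qed
  qed
qed





lemma peval_spec:
  "peval (specpt c u0 x) (PhiF d k) = (-1) ^ k * DD (\<lambda>j. \<Sum>i\<le>d. c (acoef i j) * u0 ^ i) d k (map x (rev [1..<k+2]))"
proof -
  have bb: "(\<lambda>j. gsubst (\<lambda>x. x) (specpt c u0 x) (bbv d j)) = (\<lambda>j. \<Sum>i\<le>d. c (acoef i j) * u0 ^ i)"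
    unfolding bbv_def
    by (simp add: gsubst_sum[OF ishom_id] gsubst_mult[OF ishom_id] gsubst_power[OF ishom_id]
      gsubst_Var[OF ishom_id] specpt_def acoef_def)
  have mL: "map (gsubst (\<lambda>x. x) (specpt c u0 x)) (xsv k) = map x (rev [1..<k+2])"
    unfolding xsv_def by (auto simp: gsubst_Var[OF ishom_id] specpt_def)
  show ?thesis
    unfolding PhiF_GG GG_def peval_gsubst
    by (simp add: gsubst_mult[OF ishom_id] gsubst_neg1_power[OF ishom_id] gsubst_DD[OF ishom_id] bb mL)
qed

lemma poly_PhiUni: "poly (PhiUni d c u0) y = DD (\<lambda>j. \<Sum>i\<le>d. c (acoef i j) * u0 ^ i) d 0 [y]"
  unfolding PhiUni_def DD_single by (simp add: poly_sum poly_monom)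

lemma coeff_PhiUni: "coeff (PhiUni d c u0) n = (if n \<le> d then (\<Sum>i\<le>d. c (acoef i n) * u0 ^ i) else 0)"
  unfolding PhiUni_def coeff_sum by (simp add: sum.delta)

lemma part_iii:
  assumes nz: "PhiUni d c u0 \<noteq> 0" and uinj: "inj_on u {1..d}"
    and roots: "{y. poly (PhiUni d c u0) y = 0} = u ` {1..d}"
  shows "(\<forall>k\<in>{1..d}. peval (specpt c u0 x) (PhiF d (k - 1)) = 0)
     \<longleftrightarrow> (\<exists>\<pi>. \<pi> permutes {1..d} \<and> (\<forall>k\<in>{1..d}. x k = u (\<pi> k)))"
proof -
  define b where "b = (\<lambda>j. \<Sum>i\<le>d. c (acoef i j) * u0 ^ i)"
  let ?f = "PhiUni d c u0"
  have Z: "DD b d 0 [y] = 0 \<longleftrightarrow> y \<in> u ` {1..d}" for y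
  proof -
    have "DD b d 0 [y] = poly ?f y" by (simp add: poly_PhiUni b_def)
    then have "DD b d 0 [y] = 0 \<longleftrightarrow> y \<in> {y. poly ?f y = 0}" by simp
    then show ?thesis unfolding roots .
  qed
  have "card (u ` {1..d}) = d" using uinj by (simp add: card_image)
  then have "d \<le> degree ?f" using card_poly_roots_bound[OF nz] roots by simp
  moreover have "degree ?f \<le> d"
    by (rule degree_le) (simp add: coeff_PhiUni)
  ultimately have "degree ?f = d" by simp
  then have "coeff ?f d \<noteq> 0" using nz leading_coeff_0_iff[of ?f] by simp
  then have bd: "b d \<noteq> 0" by (simp add: coeff_PhiUni b_def)
  have "(\<forall>k\<in>{1..d}. peval (specpt c u0 x) (PhiF d (k - 1)) = 0)
      \<longleftrightarrow> (\<forall>k\<in>{1..d}. DD b d (k - 1) (map x (rev [1..<k+1])) = 0)"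
  proof (intro ball_cong refl)
    fix k assume "k \<in> {1..d}"
    then have "k - 1 + 2 = k + 1" by simp
    then show "(peval (specpt c u0 x) (PhiF d (k - 1)) = 0) = (DD b d (k - 1) (map x (rev [1..<k + 1])) = 0)"
      unfolding peval_spec b_def by simp
  qed
  also have "\<dots> \<longleftrightarrow> (\<exists>\<pi>. \<pi> permutes {1..d} \<and> (\<forall>k\<in>{1..d}. x k = u (\<pi> k)))"
    by (rule part_iii_core[OF Z uinj bd])
  finally show ?thesis .
qed


theorem mainTheorem10:
  fixes n d :: nat and E :: "nat \<Rightarrow> nat \<Rightarrow> bool"
    and i0 l :: nat and j :: "nat \<Rightarrow> nat"
  assumes edges_in: "\<And>a b. E a b \<Longrightarrow> a \<in> {1..n} \<and> b \<in> {1..n}"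
    and sym: "\<And>a b. E a b \<Longrightarrow> E b a"
    and irrefl: "\<And>a. \<not> E a a"
    and regular: "\<And>a. a \<in> {1..n} \<Longrightarrow> card {b. E a b} = d"
    and connected: "\<And>a b. a \<in> {1..n} \<Longrightarrow> b \<in> {1..n} \<Longrightarrow> E\<^sup>*\<^sup>* a b"
    and i0: "i0 \<in> {1..n}"
    and l: "1 \<le> l" "l \<le> d"
    and j_inj: "inj_on j {1..l}"
    and j_nb: "\<And>k. k \<in> {1..l} \<Longrightarrow> E i0 (j k)"
  shows
    "psubst (\<lambda>v. case v of A a b \<Rightarrow> Var (A a b)
                   | X k \<Rightarrow> (if k = 0 then Var (X i0) else Var (X (j k))))
        (PhiF d (l - 1)) \<in> vanI d n (UH d n E)
     \<and> (\<forall>l'. 1 \<le> l' \<and> l' \<le> d \<longrightarrow>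
          (\<forall>\<pi>. \<pi> permutes {1..l'} \<longrightarrow>
             psubst (\<lambda>v. case v of A a b \<Rightarrow> Var (A a b) | X k \<Rightarrow> Var (X (\<pi> k)))
               (PhiF d (l' - 1)) = PhiF d (l' - 1))
          \<and> xdeg (PhiF d (l' - 1)) = 2 * d - l' + 1)
     \<and> (\<forall>c u0 (u :: nat \<Rightarrow> complex).
          PhiUni d c u0 \<noteq> 0 \<and> inj_on u {1..d}
          \<and> {y. poly (PhiUni d c u0) y = 0} = u ` {1..d} \<longrightarrow>
          (\<forall>x :: nat \<Rightarrow> complex.
             (\<forall>k\<in>{1..d}. peval (specpt c u0 x) (PhiF d (k - 1)) = 0)
             \<longleftrightarrow> (\<exists>\<pi>. \<pi> permutes {1..d} \<and> (\<forall>k\<in>{1..d}. x k = u (\<pi> k)))))"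
  proof (intro conjI allI impI)
  show "psubst (\<lambda>v. case v of A a b \<Rightarrow> Var (A a b)
                   | X k \<Rightarrow> (if k = 0 then Var (X i0) else Var (X (j k))))
        (PhiF d (l - 1)) \<in> vanI d n (UH d n E)"
    by (rule part_i[where E=E and nb=j and n=n and d=d, OF edges_in i0 l(1) j_inj j_nb])
next
  fix l' \<pi> assume l': "1 \<le> l' \<and> l' \<le> d" and p: "\<pi> permutes {1..l'}"
  have "\<pi> permutes {1..Suc (l' - 1)}" using p l' by simp
  then show "psubst (\<lambda>v. case v of A a b \<Rightarrow> Var (A a b) | X k \<Rightarrow> Var (X (\<pi> k)))
               (PhiF d (l' - 1)) = PhiF d (l' - 1)"
    unfolding PhiF_GG by (rule GG_sym)
next
  fix l' assume l': "1 \<le> l' \<and> l' \<le> d"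
  then have "xdeg (GG d (l' - 1)) = 2 * d - (l' - 1)" by (intro xdeg_GG) auto
  moreover have "2 * d - (l' - 1) = 2 * d - l' + 1" using l' by arith
  ultimately show "xdeg (PhiF d (l' - 1)) = 2 * d - l' + 1" by (simp only: PhiF_GG)
next
  fix c u0 and u :: "nat \<Rightarrow> complex" and x :: "nat \<Rightarrow> complex"
  assume h: "PhiUni d c u0 \<noteq> 0 \<and> inj_on u {1..d} \<and> {y. poly (PhiUni d c u0) y = 0} = u ` {1..d}"
  from h have h1: "PhiUni d c u0 \<noteq> 0" by (rule conjunct1)
  from h have h2: "inj_on u {1..d}" by simp
  from h have h3: "{y. poly (PhiUni d c u0) y = 0} = u ` {1..d}" by simp
  show "(\<forall>k\<in>{1..d}. peval (specpt c u0 x) (PhiF d (k - 1)) = 0)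
             \<longleftrightarrow> (\<exists>\<pi>. \<pi> permutes {1..d} \<and> (\<forall>k\<in>{1..d}. x k = u (\<pi> k)))"
    by (rule part_iii[OF h1 h2 h3])
qed

end
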